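(* Let $B_1$ be a Keedwell Sudoku board and let $g\in G_9$. If $B_2=g\cdot B_1$ is also a Keedwell Sudoku board, then $g\in G_k$.
   Context: A Sudoku board is a $9\times 9$ array with entries from $\{0,\dots,8\}$ such that every row, column and each of the nine $3\times 3$ blocks (subsquares) contains each symbol once; the subsquare in block-row $i$ and block-column $j$ ($i,j\in\{0,1,2\}$) is the $(i,j)$th subsquare. The full Sudoku symmetry group is $G_9=H_9\times S_9$, where $H_9$ is the group of cell rearrangements generated by permutations of the three bands (horizontal strips of blocks), permutations of the rows within a band, permutations of the three pillars (vertical strips of blocks), permutations of the columns within a pillar, and the transpose, and $S_9$ is the group of all relabelings (permutations of the symbols applied to every entry). For a $3\times 3$ array, let $\alpha$ be the operation cycling its rows down by one (row $r$ moves to row $r+1 \bmod 3$) and $\beta$ the operation cycling its columns right by one. A Sudoku board $B$ with upper-left subsquare $K$ is Keedwell if there are integers $c_{ij},d_{ij}\in\{0,1,2\}$ ($i,j\in\{0,1,2\}$) with $c_{00}=d_{00}=0$ such that the $(i,j)$th subsquare of $B$ equals $\alpha^{c_{ij}}\beta^{d_{ij}}K$ for all $i,j$. $G_k$ is the set of all $g\in G_9$ that map the set of Keedwell boards to itself (a subgroup of $G_9$). *)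

theory Defs
  imports "HOL-Library.FuncSet" "HOL-Combinatorics.Permutations"
begin

type_synonym cell = "nat \<times> nat"
type_synonym board = "cell \<Rightarrow> nat"

definition grid :: "cell set" where
  "grid = {0..<9} \<times> {0..<9}"

definition sudoku_board :: "board \<Rightarrow> bool" where
  "sudoku_board B \<longleftrightarrow>
     B \<in> extensional grid \<and>
     (\<forall>r<9. bij_betw (\<lambda>c. B (r, c)) {0..<9} {0..<9}) \<and>
     (\<forall>c<9. bij_betw (\<lambda>r. B (r, c)) {0..<9} {0..<9}) \<and>
     (\<forall>i<3. \<forall>j<3. bij_betw (\<lambda>(x, y). B (3*i + x, 3*j + y))
                               ({0..<3} \<times> {0..<3}) {0..<9})"

definition subsquare :: "board \<Rightarrow> nat \<Rightarrow> nat \<Rightarrow> (nat \<Rightarrow> nat \<Rightarrow> nat)" where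
  "subsquare B i j = (\<lambda>r s. B (3*i + r, 3*j + s))"

(* alpha: cycle rows down by one (row r moves to row r+1 mod 3) *)
definition alpha :: "(nat \<Rightarrow> nat \<Rightarrow> nat) \<Rightarrow> (nat \<Rightarrow> nat \<Rightarrow> nat)" where
  "alpha A = (\<lambda>r s. A ((r + 2) mod 3) s)"

(* beta: cycle columns right by one (column s moves to column s+1 mod 3) *)
definition beta :: "(nat \<Rightarrow> nat \<Rightarrow> nat) \<Rightarrow> (nat \<Rightarrow> nat \<Rightarrow> nat)" where
  "beta A = (\<lambda>r s. A r ((s + 2) mod 3))"

definition keedwell :: "board \<Rightarrow> bool" where
  "keedwell B \<longleftrightarrow> sudoku_board B \<and>
     (\<exists>c d :: nat \<Rightarrow> nat \<Rightarrow> nat. c 0 0 = 0 \<and> d 0 0 = 0 \<and>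
        (\<forall>i<3. \<forall>j<3. c i j < 3 \<and> d i j < 3 \<and>
           (\<forall>r<3. \<forall>s<3. subsquare B i j r s =
                ((alpha ^^ c i j) ((beta ^^ d i j) (subsquare B 0 0))) r s)))"

definition band_perm :: "(nat \<Rightarrow> nat) \<Rightarrow> nat \<Rightarrow> nat" where
  "band_perm p r = (if r < 9 then 3 * p (r div 3) + r mod 3 else r)"

definition inband_perm :: "nat \<Rightarrow> (nat \<Rightarrow> nat) \<Rightarrow> nat \<Rightarrow> nat" where
  "inband_perm i p r = (if r div 3 = i \<and> r < 9 then 3 * i + p (r mod 3) else r)"

definition row_map :: "(nat \<Rightarrow> nat) \<Rightarrow> cell \<Rightarrow> cell" where
  "row_map f = (\<lambda>(r, c). (f r, c))"

definition col_map :: "(nat \<Rightarrow> nat) \<Rightarrow> cell \<Rightarrow> cell" where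
  "col_map f = (\<lambda>(r, c). (r, f c))"

definition transp :: "cell \<Rightarrow> cell" where
  "transp = (\<lambda>(r, c). (c, r))"

definition H9_gens :: "(cell \<Rightarrow> cell) set" where
  "H9_gens =
     {row_map (band_perm p) | p. p permutes {0..<3}} \<union>
     {row_map (inband_perm i p) | i p. i < 3 \<and> p permutes {0..<3}} \<union>
     {col_map (band_perm p) | p. p permutes {0..<3}} \<union>
     {col_map (inband_perm i p) | i p. i < 3 \<and> p permutes {0..<3}} \<union>
     {transp}"

(* H_9: the group generated by the generators (finite, so closure under
   composition with the identity suffices). *)
inductive_set H9 :: "(cell \<Rightarrow> cell) set" where
  H9_id: "id \<in> H9"
| H9_step: "g \<in> H9_gens \<Longrightarrow> h \<in> H9 \<Longrightarrow> g \<circ> h \<in> H9"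

definition G9 :: "((cell \<Rightarrow> cell) \<times> (nat \<Rightarrow> nat)) set" where
  "G9 = H9 \<times> {\<pi>. \<pi> permutes {0..<9}}"

(* Action: cell x's content moves to cell \<sigma> x, and symbols are relabelled by \<pi>. *)
definition act :: "((cell \<Rightarrow> cell) \<times> (nat \<Rightarrow> nat)) \<Rightarrow> board \<Rightarrow> board" where
  "act g B = (\<lambda>x. if x \<in> grid then snd g (B (inv_into grid (fst g) x)) else undefined)"

definition Gk :: "((cell \<Rightarrow> cell) \<times> (nat \<Rightarrow> nat)) set" where
  "Gk = {g \<in> G9. act g ` {B. keedwell B} = {B. keedwell B}}"

end

theory Submission
  imports Defs
begin


definition aff :: "nat \<Rightarrow> nat \<Rightarrow> nat \<Rightarrow> nat" where
  "aff e k x = (e*x + k) mod 3"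

lemma less3: "(x::nat) < 3 \<Longrightarrow> x = 0 \<or> x = 1 \<or> x = 2" by auto

lemma aff_lt[simp]: "aff e k x < 3" by (simp add: aff_def)

lemma aff_comp: "aff a b (aff c d x) = aff (a*c) (a*d+b) x"
proof -
  have "(a*((c*x+d) mod 3) + b) mod 3 = (a*(c*x+d) + b) mod 3"
    by (metis mod_add_left_eq mod_mult_right_eq)
  then show ?thesis unfolding aff_def by (simp add: algebra_simps)
qed

lemma aff_mod: "aff a b x = aff (a mod 3) (b mod 3) x"
proof -
  have "((a mod 3)*x + b mod 3) mod 3 = ((a mod 3)*x + b) mod 3" by (metis mod_add_right_eq)
  also have "\<dots> = (a*x + b) mod 3" by (metis mod_add_left_eq mod_mult_left_eq)
  finally show ?thesis unfolding aff_def by simp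
qed

lemma aff_10: "p < 3 \<Longrightarrow> aff 1 0 p = p" by (simp add: aff_def)

lemma aff_inv: "e \<in> {1,2} \<Longrightarrow> k < 3 \<Longrightarrow> X < 3 \<Longrightarrow> aff e k (aff e (e*(3-k)) X) = X"
  unfolding insert_iff empty_iff apply (drule less3)+ by (elim disjE; simp add: aff_def)


lemma aff_inj: "e \<in> {1,2} \<Longrightarrow> k < 3 \<Longrightarrow> x < 3 \<Longrightarrow> x' < 3 \<Longrightarrow> aff e k x = aff e k x' \<Longrightarrow> x = x'"
  unfolding insert_iff empty_iff apply (drule less3)+ by (elim disjE; simp add: aff_def)

lemma kw_arith: "a \<in> {1,2} \<Longrightarrow> u < 3 \<Longrightarrow> u0 < 3 \<Longrightarrow> X < 3 \<Longrightarrow>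
   aff a u X = aff a u0 (aff 1 (2*((2*a*(u+3-u0)) mod 3)) X)"
  unfolding insert_iff empty_iff apply (drule less3)+ by (elim disjE; simp add: aff_def)

lemma perm3_arith: "a<3 \<Longrightarrow> b<3 \<Longrightarrow> c<3 \<Longrightarrow> a\<noteq>b \<Longrightarrow> a\<noteq>c \<Longrightarrow> b\<noteq>c \<Longrightarrow>
  (b+3-a) mod 3 \<in> {1,2} \<and> aff ((b+3-a) mod 3) a 0 = a \<and> aff ((b+3-a) mod 3) a 1 = b \<and> aff ((b+3-a) mod 3) a 2 = c"
  unfolding insert_iff empty_iff apply (drule less3)+ by (elim disjE; simp add: aff_def)

lemma slope_mod: "(e::nat) \<in> {1,2} \<Longrightarrow> e' \<in> {1,2} \<Longrightarrow> (e*e') mod 3 \<in> {1,2}"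
  by auto

lemma slope_eq: "a \<in> {1,2} \<Longrightarrow> b \<in> {1,2} \<Longrightarrow> aff a W 0 = aff b W' 0 \<Longrightarrow> aff a W 1 = aff b W' 1 \<Longrightarrow> a = b"
proof -
  assume h: "a \<in> {1,2}" "b \<in> {1,2}" "aff a W 0 = aff b W' 0" "aff a W 1 = aff b W' 1"
  then have "W mod 3 = W' mod 3" "(a + W) mod 3 = (b + W') mod 3" by (simp_all add: aff_def)
  then have "(a + W mod 3) mod 3 = (b + W mod 3) mod 3" by (metis mod_add_right_eq)
  moreover have "W mod 3 < 3" by simp
  ultimately show "a = b" using h(1,2) apply - apply (drule less3) by (auto)
qed


definition sw :: "bool \<Rightarrow> cell \<Rightarrow> cell" where
  "sw t p = (if t then (snd p, fst p) else p)"

definition bf :: "(nat\<Rightarrow>nat) \<Rightarrow> (nat\<Rightarrow>nat) \<Rightarrow> (nat\<Rightarrow>nat) \<Rightarrow> bool" where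
  "bf P e k \<longleftrightarrow> P permutes {0..<3} \<and> (\<forall>i<3. e i \<in> {1,2} \<and> k i < 3)"

definition bmap :: "(nat\<Rightarrow>nat) \<Rightarrow> (nat\<Rightarrow>nat) \<Rightarrow> (nat\<Rightarrow>nat) \<Rightarrow> nat \<Rightarrow> nat \<Rightarrow> nat" where
  "bmap P e k i x = 3 * P i + aff (e i) (k i) x"

definition formp where
  "formp \<sigma> t P e k Q f l \<longleftrightarrow> bf P e k \<and> bf Q f l \<and>
     (\<forall>i<3. \<forall>j<3. \<forall>x<3. \<forall>y<3. \<sigma> (3*i+x, 3*j+y) = sw t (bmap P e k i x, bmap Q f l j y))"

definition form :: "(cell \<Rightarrow> cell) \<Rightarrow> bool" where
  "form \<sigma> \<longleftrightarrow> (\<exists>t P e k Q f l. formp \<sigma> t P e k Q f l)"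

lemma perm_lt: "P permutes {0..<3} \<Longrightarrow> (i::nat) < 3 \<Longrightarrow> P i < 3"
  using permutes_in_image[of P "{0..<3}" i] by simp

lemma perm_surj: "P permutes {0..<3} \<Longrightarrow> (I::nat) < 3 \<Longrightarrow> \<exists>i<3. P i = I"
proof -
  assume a: "P permutes {0..<3}" "I < 3"
  have "inv P I < 3" using perm_lt[OF permutes_inv[OF a(1)] a(2)] .
  moreover have "P (inv P I) = I" using permutes_inverses(1)[OF a(1)] .
  ultimately show ?thesis by blast
qed

lemma perm_inj: "P permutes {0..<(3::nat)} \<Longrightarrow> P i = P i' \<Longrightarrow> i = i'"
  using permutes_inj[of P "{0..<3}"] unfolding inj_def by blast

lemma bmap_lt: "bf P e k \<Longrightarrow> i < 3 \<Longrightarrow> bmap P e k i x < 9"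
proof -
  assume "bf P e k" "i < 3"
  then have "P i < 3" using perm_lt bf_def by blast
  moreover have "aff (e i) (k i) x < 3" by simp
  ultimately show ?thesis unfolding bmap_def by linarith
qed

lemma bmap_div[simp]: "bmap P e k i x div 3 = P i"
  unfolding bmap_def by simp

lemma bmap_mod[simp]: "bmap P e k i x mod 3 = aff (e i) (k i) x"
  unfolding bmap_def by simp

lemma perm3_aff:
  assumes "p permutes {0..<3}"
  shows "\<exists>ep kp. ep \<in> {1,2} \<and> kp < 3 \<and> (\<forall>z<3. p z = aff ep kp z)"
proof -
  have lt: "p 0 < 3" "p 1 < 3" "p 2 < 3" using perm_lt[OF assms] by auto
  have d: "p 0 \<noteq> p 1" "p 0 \<noteq> p 2" "p 1 \<noteq> p 2" using perm_inj[OF assms] by force+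
  from perm3_arith[OF lt d] show ?thesis
    apply (rule_tac x="(p 1 + 3 - p 0) mod 3" in exI, rule_tac x="p 0" in exI)
    using lt by (auto dest!: less3)
qed

definition goodf :: "(nat \<Rightarrow> nat) \<Rightarrow> bool" where
  "goodf \<phi> \<longleftrightarrow> (\<exists>p. p permutes {0..<3} \<and> \<phi> = band_perm p) \<or>
     (\<exists>i0 p. i0 < 3 \<and> p permutes {0..<3} \<and> \<phi> = inband_perm i0 p)"

lemma fam_closed:
  assumes bf: "bf P e k" and g: "goodf \<phi>"
  shows "\<exists>P' e' k'. bf P' e' k' \<and> (\<forall>i<3. \<forall>x<3. \<phi> (bmap P e k i x) = bmap P' e' k' i x)"
  using g unfolding goodf_def
proof (elim disjE exE conjE)
  fix p assume p: "p permutes {0..<3}" and ph: "\<phi> = band_perm p"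
  show ?thesis
  proof (intro exI conjI allI impI)
    show "bf (p \<circ> P) e k" using bf p unfolding bf_def by (simp add: permutes_compose)
    fix i x :: nat assume "i < 3" "x < 3"
    then show "\<phi> (bmap P e k i x) = bmap (p \<circ> P) e k i x"
      using bmap_lt[OF bf] unfolding ph band_perm_def by (simp add: bmap_def[of "p \<circ> P"])
  qed
next
  fix i0 p assume i0: "i0 < 3" and p: "p permutes {0..<3}" and ph: "\<phi> = inband_perm i0 p"
  obtain ep kp where ep: "ep \<in> {1,2}" "kp < 3" "\<forall>z<3. p z = aff ep kp z"
    using perm3_aff[OF p] by blast
  define e' where "e' = (\<lambda>i. if P i = i0 then (ep * e i) mod 3 else e i)"
  define k' where "k' = (\<lambda>i. if P i = i0 then (ep * k i + kp) mod 3 else k i)"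
  show ?thesis
  proof (intro exI conjI allI impI)
    show "bf P e' k'" using bf ep(1) unfolding bf_def e'_def k'_def
      by (auto intro: slope_mod[of ep])
    fix i x :: nat assume ix: "i < 3" "x < 3"
    show "\<phi> (bmap P e k i x) = bmap P e' k' i x"
    proof (cases "P i = i0")
      case True
      have "\<phi> (bmap P e k i x) = 3 * i0 + p (aff (e i) (k i) x)"
        using bmap_lt[OF bf ix(1)] True unfolding ph inband_perm_def by simp
      also have "\<dots> = 3 * i0 + aff (ep * e i) (ep * k i + kp) x"
        using ep(3) by (simp add: aff_comp)
      also have "\<dots> = bmap P e' k' i x"
        unfolding bmap_def e'_def k'_def using True by (simp add: aff_mod[of "ep * e i"])
      finally show ?thesis .
    next
      case False
      then show ?thesis using bmap_lt[OF bf ix(1)] unfolding ph inband_perm_def bmap_def e'_def k'_def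
        by simp
    qed
  qed
qed

lemma form_row: "form \<sigma> \<Longrightarrow> goodf \<phi> \<Longrightarrow> form (row_map \<phi> \<circ> \<sigma>)"
proof -
  assume "form \<sigma>" "goodf \<phi>"
  then obtain t P e k Q f l where fp: "formp \<sigma> t P e k Q f l" unfolding form_def by blast
  then have bP: "bf P e k" and bQ: "bf Q f l" unfolding formp_def by auto
  show ?thesis
  proof (cases t)
    case True
    obtain Q' f' l' where c: "bf Q' f' l'" "\<forall>i<3. \<forall>x<3. \<phi> (bmap Q f l i x) = bmap Q' f' l' i x"
      using fam_closed[OF bQ \<open>goodf \<phi>\<close>] by blast
    have "formp (row_map \<phi> \<circ> \<sigma>) t P e k Q' f' l'"
      using fp c True unfolding formp_def by (simp add: sw_def row_map_def)
    then show ?thesis unfolding form_def by blast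
  next
    case False
    obtain P' e' k' where c: "bf P' e' k'" "\<forall>i<3. \<forall>x<3. \<phi> (bmap P e k i x) = bmap P' e' k' i x"
      using fam_closed[OF bP \<open>goodf \<phi>\<close>] by blast
    have "formp (row_map \<phi> \<circ> \<sigma>) t P' e' k' Q f l"
      using fp c False unfolding formp_def by (simp add: sw_def row_map_def)
    then show ?thesis unfolding form_def by blast
  qed
qed

lemma form_col: "form \<sigma> \<Longrightarrow> goodf \<phi> \<Longrightarrow> form (col_map \<phi> \<circ> \<sigma>)"
proof -
  assume "form \<sigma>" "goodf \<phi>"
  then obtain t P e k Q f l where fp: "formp \<sigma> t P e k Q f l" unfolding form_def by blast
  then have bP: "bf P e k" and bQ: "bf Q f l" unfolding formp_def by auto
  show ?thesis
  proof (cases t)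
    case False
    obtain Q' f' l' where c: "bf Q' f' l'" "\<forall>i<3. \<forall>x<3. \<phi> (bmap Q f l i x) = bmap Q' f' l' i x"
      using fam_closed[OF bQ \<open>goodf \<phi>\<close>] by blast
    have "formp (col_map \<phi> \<circ> \<sigma>) t P e k Q' f' l'"
      using fp c False unfolding formp_def by (simp add: sw_def col_map_def)
    then show ?thesis unfolding form_def by blast
  next
    case True
    obtain P' e' k' where c: "bf P' e' k'" "\<forall>i<3. \<forall>x<3. \<phi> (bmap P e k i x) = bmap P' e' k' i x"
      using fam_closed[OF bP \<open>goodf \<phi>\<close>] by blast
    have "formp (col_map \<phi> \<circ> \<sigma>) t P' e' k' Q f l"
      using fp c True unfolding formp_def by (simp add: sw_def col_map_def)
    then show ?thesis unfolding form_def by blast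
  qed
qed

lemma form_transp: "form \<sigma> \<Longrightarrow> form (transp \<circ> \<sigma>)"
proof -
  assume "form \<sigma>"
  then obtain t P e k Q f l where fp: "formp \<sigma> t P e k Q f l" unfolding form_def by blast
  then have "formp (transp \<circ> \<sigma>) (\<not> t) P e k Q f l"
    unfolding formp_def by (simp add: sw_def transp_def)
  then show ?thesis unfolding form_def by blast
qed

lemma H9_form: "\<sigma> \<in> H9 \<Longrightarrow> form \<sigma>"
proof (induction rule: H9.induct)
  case H9_id
  have "formp id False id (\<lambda>_. 1) (\<lambda>_. 0) id (\<lambda>_. 1) (\<lambda>_. 0)"
    unfolding formp_def bf_def bmap_def aff_def sw_def by (simp add: permutes_id)
  then show ?case unfolding form_def by blast
next
  case (H9_step g h)
  from H9_step.hyps(1) show ?case unfolding H9_gens_def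
  proof (elim UnE CollectE exE conjE insertE)
    fix p assume "g = row_map (band_perm p)" "p permutes {0..<3}"
    then show ?thesis using form_row[OF H9_step.IH, of "band_perm p"] unfolding goodf_def by blast
  next
    fix i p assume "g = row_map (inband_perm i p)" "i < 3" "p permutes {0..<3}"
    then show ?thesis using form_row[OF H9_step.IH, of "inband_perm i p"] unfolding goodf_def by blast
  next
    fix p assume "g = col_map (band_perm p)" "p permutes {0..<3}"
    then show ?thesis using form_col[OF H9_step.IH, of "band_perm p"] unfolding goodf_def by blast
  next
    fix i p assume "g = col_map (inband_perm i p)" "i < 3" "p permutes {0..<3}"
    then show ?thesis using form_col[OF H9_step.IH, of "inband_perm i p"] unfolding goodf_def by blast
  next
    assume "g = transp"
    then show ?thesis using form_transp[OF H9_step.IH] by (simp add: o_def)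
  next
    assume "g \<in> {}" then show ?thesis by simp
  qed
qed


lemma alpha_pow: "r < 3 \<Longrightarrow> (alpha ^^ n) A r s = A ((r + 2*n) mod 3) s"
proof (induction n arbitrary: r)
  case 0 then show ?case by simp
next
  case (Suc n)
  have "(alpha ^^ Suc n) A r s = (alpha ^^ n) A ((r + 2) mod 3) s" by (simp add: alpha_def)
  also have "\<dots> = A (((r + 2) mod 3 + 2*n) mod 3) s" using Suc.IH by simp
  also have "((r + 2) mod 3 + 2*n) mod 3 = (r + 2 * Suc n) mod 3" by (simp add: mod_add_left_eq)
  finally show ?case .
qed

lemma beta_pow: "s < 3 \<Longrightarrow> (beta ^^ n) A r s = A r ((s + 2*n) mod 3)"
proof (induction n arbitrary: s)
  case 0 then show ?case by simp
next
  case (Suc n)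
  have "(beta ^^ Suc n) A r s = (beta ^^ n) A r ((s + 2) mod 3)" by (simp add: beta_def)
  also have "\<dots> = A r (((s + 2) mod 3 + 2*n) mod 3)" using Suc.IH by simp
  also have "((s + 2) mod 3 + 2*n) mod 3 = (s + 2 * Suc n) mod 3" by (simp add: mod_add_left_eq)
  finally show ?case .
qed

lemma ab_pow: "r < 3 \<Longrightarrow> s < 3 \<Longrightarrow> (alpha ^^ c) ((beta ^^ d) (subsquare B 0 0)) r s
   = B (aff 1 (2*c) r, aff 1 (2*d) s)"
  by (simp add: alpha_pow beta_pow subsquare_def aff_def add.commute)

lemma keed_iff: "keedwell B \<longleftrightarrow> sudoku_board B \<and> (\<exists>c d. c 0 0 = 0 \<and> d 0 0 = 0 \<and>
   (\<forall>i<3. \<forall>j<3. c i j < 3 \<and> d i j < 3 \<and>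
      (\<forall>x<3. \<forall>y<3. B (3*i+x, 3*j+y) = B (aff 1 (2 * c i j) x, aff 1 (2 * d i j) y))))"
proof -
  have sq: "\<And>i j r s. subsquare B i j r s = B (3*i+r, 3*j+s)" by (simp add: subsquare_def)
  show ?thesis unfolding keedwell_def by (simp add: ab_pow sq cong: conj_cong)
qed

lemma bij_iff_img: "finite A \<Longrightarrow> card A = card B \<Longrightarrow> bij_betw f A B \<longleftrightarrow> f ` A = B"
  by (metis bij_betw_def bij_betw_imp_surj_on eq_card_imp_inj_on)

lemma bij9: "bij_betw f {0..<9::nat} {0..<9::nat} \<longleftrightarrow> (\<forall>a<9. f a < 9) \<and> (\<forall>v<9. \<exists>a<9. f a = v)"
proof -
  have "bij_betw f {0..<9::nat} {0..<9::nat} \<longleftrightarrow> f ` {0..<9} = {0..<9}"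
    by (rule bij_iff_img) auto
  also have "\<dots> \<longleftrightarrow> (\<forall>a<9. f a < 9) \<and> (\<forall>v<9. \<exists>a<9. f a = v)"
  proof
    assume "f ` {0..<9} = {0..<9}"
    then show "(\<forall>a<9. f a < 9) \<and> (\<forall>v<9. \<exists>a<9. f a = v)"
      by (metis atLeast0LessThan imageE image_eqI lessThan_iff)
  next
    assume h: "(\<forall>a<9. f a < 9) \<and> (\<forall>v<9. \<exists>a<9. f a = v)"
    show "f ` {0..<9} = {0..<9}"
    proof
      show "f ` {0..<9} \<subseteq> {0..<9}" using h by auto
      show "{0..<9} \<subseteq> f ` {0..<9}"
      proof
        fix v assume "v \<in> {0..<(9::nat)}"
        then obtain a where "a < 9" "f a = v" using h by auto
        then show "v \<in> f ` {0..<9}" by force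
      qed
    qed
  qed
  finally show ?thesis .
qed

lemma bij33: "bij_betw (\<lambda>(x,y). g x y) ({0..<3::nat}\<times>{0..<3::nat}) {0..<9::nat} \<longleftrightarrow>
   (\<forall>x<3. \<forall>y<3. g x y < 9) \<and> (\<forall>v<9. \<exists>x<3. \<exists>y<3. g x y = v)"
proof -
  have "bij_betw (\<lambda>(x,y). g x y) ({0..<3::nat}\<times>{0..<3::nat}) {0..<9::nat} \<longleftrightarrow>
     (\<lambda>(x,y). g x y) ` ({0..<3::nat}\<times>{0..<3::nat}) = {0..<9}"
    by (rule bij_iff_img) (auto simp: card_cartesian_product)
  also have "\<dots> \<longleftrightarrow> (\<forall>x<3. \<forall>y<3. g x y < 9) \<and> (\<forall>v<9. \<exists>x<3. \<exists>y<3. g x y = v)"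
  proof
    assume h: "(\<lambda>(x,y). g x y) ` ({0..<3::nat}\<times>{0..<3::nat}) = {0..<9}"
    show "(\<forall>x<3. \<forall>y<3. g x y < 9) \<and> (\<forall>v<9. \<exists>x<3. \<exists>y<3. g x y = v)"
    proof (intro conjI allI impI)
      fix x y :: nat assume "x < 3" "y < 3"
      then have "g x y \<in> (\<lambda>(x,y). g x y) ` ({0..<3::nat}\<times>{0..<3::nat})" by force
      then show "g x y < 9" using h by auto
    next
      fix v :: nat assume "v < 9"
      then have "v \<in> (\<lambda>(x,y). g x y) ` ({0..<3::nat}\<times>{0..<3::nat})" using h by auto
      then obtain x y where "x < 3" "y < 3" "v = g x y" by auto
      then show "\<exists>x<3. \<exists>y<3. g x y = v" by blast
    qed
  next
    assume h: "(\<forall>x<3. \<forall>y<3. g x y < 9) \<and> (\<forall>v<9. \<exists>x<3. \<exists>y<3. g x y = v)"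
    show "(\<lambda>(x,y). g x y) ` ({0..<3::nat}\<times>{0..<3::nat}) = {0..<9}"
    proof
      show "(\<lambda>(x,y). g x y) ` ({0..<3::nat}\<times>{0..<3::nat}) \<subseteq> {0..<9}" using h by auto
      show "{0..<9} \<subseteq> (\<lambda>(x,y). g x y) ` ({0..<3::nat}\<times>{0..<3::nat})"
      proof
        fix v assume "v \<in> {0..<(9::nat)}"
        then obtain x y where "x < 3" "y < 3" "g x y = v" using h by auto
        then show "v \<in> (\<lambda>(x,y). g x y) ` ({0..<3::nat}\<times>{0..<3::nat})" by force
      qed
    qed
  qed
  finally show ?thesis .
qed

lemma l9: "i < 3 \<Longrightarrow> x < 3 \<Longrightarrow> 3*i+x < (9::nat)" by linarith

lemma sudoku_char: "sudoku_board B \<longleftrightarrow> B \<in> extensional grid \<and> (\<forall>r<9. \<forall>c<9. B (r,c) < 9) \<and>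
   (\<forall>r<9. \<forall>v<9. \<exists>c<9. B (r,c) = v) \<and> (\<forall>c<9. \<forall>v<9. \<exists>r<9. B (r,c) = v) \<and>
   (\<forall>i<3. \<forall>j<3. \<forall>v<9. \<exists>x<3. \<exists>y<3. B (3*i+x, 3*j+y) = v)"
  (is "?L \<longleftrightarrow> ?R")
proof
  assume L: ?L
  have e: "B \<in> extensional grid"
   and rw: "\<forall>r<9. (\<forall>a<9. B (r,a) < 9) \<and> (\<forall>v<9. \<exists>a<9. B (r,a) = v)"
   and cl: "\<forall>c<9. (\<forall>a<9. B (a,c) < 9) \<and> (\<forall>v<9. \<exists>a<9. B (a,c) = v)"
   and bl: "\<forall>i<3. \<forall>j<3. (\<forall>x<3. \<forall>y<3. B (3*i+x, 3*j+y) < 9) \<and> (\<forall>v<9. \<exists>x<3. \<exists>y<3. B (3*i+x, 3*j+y) = v)"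
    using L unfolding sudoku_board_def bij9 bij33 by auto
  show ?R
  proof (intro conjI)
    show "B \<in> extensional grid" by (fact e)
    show "\<forall>r<9. \<forall>c<9. B (r,c) < 9" using rw by blast
    show "\<forall>r<9. \<forall>v<9. \<exists>c<9. B (r,c) = v" using rw by blast
    show "\<forall>c<9. \<forall>v<9. \<exists>r<9. B (r,c) = v" using cl by blast
    show "\<forall>i<3. \<forall>j<3. \<forall>v<9. \<exists>x<3. \<exists>y<3. B (3*i+x, 3*j+y) = v" using bl by blast
  qed
next
  assume r: ?R
  then have r1: "B \<in> extensional grid" and r2: "\<forall>r<9. \<forall>c<9. B (r,c) < 9"
   and r3: "\<forall>r<9. \<forall>v<9. \<exists>c<9. B (r,c) = v" and r4: "\<forall>c<9. \<forall>v<9. \<exists>r<9. B (r,c) = v"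
   and r5: "\<forall>i<3. \<forall>j<3. \<forall>v<9. \<exists>x<3. \<exists>y<3. B (3*i+x, 3*j+y) = v" by auto
  have bnd: "\<forall>i<3. \<forall>j<3. \<forall>x<3. \<forall>y<3. B (3*i+x,3*j+y) < 9"
  proof (intro allI impI)
    fix i j x y :: nat assume "i < 3" "j < 3" "x < 3" "y < 3"
    then have "3*i+x < 9" "3*j+y < 9" by linarith+
    then show "B (3*i+x,3*j+y) < 9" using r2 by blast
  qed
  have rw: "\<forall>r<9. (\<forall>a<9. B (r,a) < 9) \<and> (\<forall>v<9. \<exists>a<9. B (r,a) = v)" using r2 r3 by simp
  have cl: "\<forall>c<9. (\<forall>a<9. B (a,c) < 9) \<and> (\<forall>v<9. \<exists>a<9. B (a,c) = v)" using r2 r4 by simp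
  have bl: "\<forall>i<3. \<forall>j<3. (\<forall>x<3. \<forall>y<3. B (3*i+x, 3*j+y) < 9) \<and> (\<forall>v<9. \<exists>x<3. \<exists>y<3. B (3*i+x, 3*j+y) = v)"
    using r5 bnd by simp
  have e: "B \<in> extensional grid" using r1 by simp
  show ?L unfolding sudoku_board_def bij9 bij33 using e rw cl bl by blast
qed


lemma sudoku_char_sw: "sudoku_board B \<longleftrightarrow> B \<in> extensional grid \<and> (\<forall>r<9. \<forall>c<9. B (sw t (r,c)) < 9) \<and>
   (\<forall>r<9. \<forall>v<9. \<exists>c<9. B (sw t (r,c)) = v) \<and> (\<forall>c<9. \<forall>v<9. \<exists>r<9. B (sw t (r,c)) = v) \<and>
   (\<forall>i<3. \<forall>j<3. \<forall>v<9. \<exists>x<3. \<exists>y<3. B (sw t (3*i+x, 3*j+y)) = v)"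
proof (cases t)
  case False
  then show ?thesis by (simp add: sw_def sudoku_char)
next
  case True
  have d: "(\<forall>i<3. \<forall>j<3. \<forall>v<9. \<exists>x<3. \<exists>y<3. B (3*j+y, 3*i+x) = v) \<longleftrightarrow>
     (\<forall>i<3. \<forall>j<3. \<forall>v<9. \<exists>x<3. \<exists>y<3. B (3*i+x, 3*j+y) = v)" by blast
  have b: "(\<forall>r<9. \<forall>c<9. B (c,r) < 9) \<longleftrightarrow> (\<forall>r<9. \<forall>c<9. B (r,c) < 9)" by blast
  show ?thesis unfolding sudoku_char using True
    apply (simp only: sw_def if_True fst_conv snd_conv d b)
    by blast
qed

lemma sudoku_inj0:
  assumes "sudoku_board B" "a < 3" "b < 3" "a' < 3" "b' < 3" "B (a,b) = B (a',b')"
  shows "a = a' \<and> b = b'"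
proof -
  have "\<forall>i<3. \<forall>j<3. bij_betw (\<lambda>(x, y). B (3*i + x, 3*j + y)) ({0..<3} \<times> {0..<3}) {0..<9}"
    using assms(1) unfolding sudoku_board_def by blast
  from this[rule_format, of 0 0] have "bij_betw (\<lambda>(x, y). B (x, y)) ({0..<3} \<times> {0..<3}) {0..<9}"
    by simp
  then have "inj_on (\<lambda>(x, y). B (x, y)) ({0..<3} \<times> {0..<(3::nat)})"
    by (simp add: bij_betw_def)
  then have "(a,b) = (a',b')" using assms(2-6) by (auto dest: inj_onD)
  then show ?thesis by simp
qed

lemma sudoku_inj_sw:
  assumes "sudoku_board B" "a < 3" "b < 3" "a' < 3" "b' < 3" "B (sw t (a,b)) = B (sw t (a',b'))"
  shows "a = a' \<and> b = b'"
proof (cases t)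
  case True
  then have "B (b,a) = B (b',a')" using assms(6) by (simp add: sw_def)
  then show ?thesis using sudoku_inj0[OF assms(1) assms(3) assms(2) assms(5) assms(4)] by simp
next
  case False
  then have "B (a,b) = B (a',b')" using assms(6) by (simp add: sw_def)
  then show ?thesis using sudoku_inj0[OF assms(1-5)] by simp
qed

lemma keed_intro:
  assumes s: "sudoku_board B"
    and H: "\<forall>i<3. \<forall>j<3. \<exists>c<3. \<exists>d<3. (i = 0 \<and> j = 0 \<longrightarrow> c = 0 \<and> d = 0) \<and>
       (\<forall>x<3. \<forall>y<3. B (3*i+x, 3*j+y) = B (aff 1 (2*c) x, aff 1 (2*d) y))"
  shows "keedwell B"
proof -
  have "\<forall>ij. \<exists>cd. fst ij < 3 \<and> snd ij < 3 \<longrightarrow> fst cd < 3 \<and> snd cd < 3 \<and>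
      (fst ij = 0 \<and> snd ij = 0 \<longrightarrow> fst cd = 0 \<and> snd cd = 0) \<and>
      (\<forall>x<3. \<forall>y<3. B (3*fst ij+x, 3*snd ij+y) = B (aff 1 (2*fst cd) x, aff 1 (2*snd cd) y))"
  proof
    fix ij :: "nat \<times> nat"
    show "\<exists>cd. fst ij < 3 \<and> snd ij < 3 \<longrightarrow> fst cd < 3 \<and> snd cd < 3 \<and>
      (fst ij = 0 \<and> snd ij = 0 \<longrightarrow> fst cd = 0 \<and> snd cd = 0) \<and>
      (\<forall>x<3. \<forall>y<3. B (3*fst ij+x, 3*snd ij+y) = B (aff 1 (2*fst cd) x, aff 1 (2*snd cd) y))"
    proof (cases "fst ij < 3 \<and> snd ij < 3")
      case True
      then obtain c d where "c < 3" "d < 3" "(fst ij = 0 \<and> snd ij = 0 \<longrightarrow> c = 0 \<and> d = 0)"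
        "\<forall>x<3. \<forall>y<3. B (3*fst ij+x, 3*snd ij+y) = B (aff 1 (2*c) x, aff 1 (2*d) y)"
        using H by blast
      then show ?thesis by (intro exI[of _ "(c,d)"]) simp
    next
      case False
      then show ?thesis by blast
    qed
  qed
  then obtain F where F: "\<forall>ij. fst ij < 3 \<and> snd ij < 3 \<longrightarrow> fst (F ij) < 3 \<and> snd (F ij) < 3 \<and>
      (fst ij = 0 \<and> snd ij = 0 \<longrightarrow> fst (F ij) = 0 \<and> snd (F ij) = 0) \<and>
      (\<forall>x<3. \<forall>y<3. B (3*fst ij+x, 3*snd ij+y) = B (aff 1 (2*fst (F ij)) x, aff 1 (2*snd (F ij)) y))"
    by (rule choice[THEN exE]) blast
  define c where "c i j = fst (F (i,j))" for i j
  define d where "d i j = snd (F (i,j))" for i j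
  have "c 0 0 = 0 \<and> d 0 0 = 0 \<and> (\<forall>i<3. \<forall>j<3. c i j < 3 \<and> d i j < 3 \<and>
      (\<forall>x<3. \<forall>y<3. B (3*i+x, 3*j+y) = B (aff 1 (2 * c i j) x, aff 1 (2 * d i j) y)))"
  proof (intro conjI allI impI)
    show "c 0 0 = 0" "d 0 0 = 0" using F[rule_format, of "(0,0)"] unfolding c_def d_def by auto
  next
    fix i j :: nat assume ij: "i < 3" "j < 3"
    have Fi: "fst (F (i,j)) < 3 \<and> snd (F (i,j)) < 3 \<and>
      (\<forall>x<3. \<forall>y<3. B (3*i+x, 3*j+y) = B (aff 1 (2*fst (F (i,j))) x, aff 1 (2*snd (F (i,j))) y))"
      using F[rule_format, of "(i,j)"] ij by simp
    show "c i j < 3" "d i j < 3" using Fi unfolding c_def d_def by auto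
    fix x y :: nat assume "x < 3" "y < 3"
    then show "B (3*i+x, 3*j+y) = B (aff 1 (2 * c i j) x, aff 1 (2 * d i j) y)"
      using Fi unfolding c_def d_def by blast
  qed
  then show ?thesis unfolding keed_iff using s by blast
qed

lemma KW:
  assumes s: "sudoku_board B" and a: "a \<in> {1,2}" and b: "b \<in> {1,2}"
    and H: "\<forall>I<3. \<forall>J<3. \<exists>u<3. \<exists>v<3. \<forall>X<3. \<forall>Y<3. B (3*I+X, 3*J+Y) = L (aff a u X) (aff b v Y)"
  shows "keedwell B"
proof (rule keed_intro[OF s], intro allI impI)
  fix I J :: nat assume IJ: "I < 3" "J < 3"
  have h0: "\<exists>u<3. \<exists>v<3. \<forall>X<3. \<forall>Y<3. B (3*0+X, 3*0+Y) = L (aff a u X) (aff b v Y)"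
    using H[rule_format, of 0 0] by simp
  obtain u0 v0 where u0: "u0 < 3" "v0 < 3"
    "\<forall>X<3. \<forall>Y<3. B (3*0+X, 3*0+Y) = L (aff a u0 X) (aff b v0 Y)"
    using h0 by blast
  show "\<exists>c<3. \<exists>d<3. (I = 0 \<and> J = 0 \<longrightarrow> c = 0 \<and> d = 0) \<and>
       (\<forall>x<3. \<forall>y<3. B (3*I+x, 3*J+y) = B (aff 1 (2*c) x, aff 1 (2*d) y))"
  proof (cases "I = 0 \<and> J = 0")
    case True
    show ?thesis
      by (rule exI[of _ 0], simp, rule exI[of _ 0]) (simp add: True aff_def)
  next
    case False
    obtain u v where uv: "u < 3" "v < 3"
      "\<forall>X<3. \<forall>Y<3. B (3*I+X, 3*J+Y) = L (aff a u X) (aff b v Y)"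
      using H[rule_format, OF IJ] by blast
    define c where "c = (2*a*(u+3-u0)) mod 3"
    define d where "d = (2*b*(v+3-v0)) mod 3"
    have "\<forall>x<3. \<forall>y<3. B (3*I+x, 3*J+y) = B (aff 1 (2*c) x, aff 1 (2*d) y)"
    proof (intro allI impI)
      fix x y :: nat assume xy: "x < 3" "y < 3"
      have "B (3*I+x, 3*J+y) = L (aff a u x) (aff b v y)" using uv xy by blast
      also have "\<dots> = L (aff a u0 (aff 1 (2*c) x)) (aff b v0 (aff 1 (2*d) y))"
        unfolding c_def d_def using kw_arith[OF a uv(1) u0(1) xy(1)] kw_arith[OF b uv(2) u0(2) xy(2)]
        by simp
      also have "\<dots> = B (3*0 + aff 1 (2*c) x, 3*0 + aff 1 (2*d) y)"
        using u0(3) by simp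
      finally show "B (3*I+x, 3*J+y) = B (aff 1 (2*c) x, aff 1 (2*d) y)" by simp
    qed
    moreover have "c < 3" "d < 3" unfolding c_def d_def by simp_all
    ultimately show ?thesis using False by blast
  qed
qed

lemma KW_sw:
  assumes s: "sudoku_board B" and a: "a \<in> {1,2}" and b: "b \<in> {1,2}"
    and H: "\<forall>I<3. \<forall>J<3. \<exists>u<3. \<exists>v<3. \<forall>X<3. \<forall>Y<3. B (sw t (3*I+X, 3*J+Y)) = L (aff a u X) (aff b v Y)"
  shows "keedwell B"
proof (cases t)
  case False
  then show ?thesis using KW[OF s a b, of L] H by (simp add: sw_def)
next
  case True
  have "\<forall>I<3. \<forall>J<3. \<exists>u<3. \<exists>v<3. \<forall>X<3. \<forall>Y<3. B (3*I+X, 3*J+Y) = (\<lambda>p q. L q p) (aff b u X) (aff a v Y)"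
  proof (intro allI impI)
    fix I J :: nat assume IJ: "I < 3" "J < 3"
    obtain u v where h: "u < 3" "v < 3" "\<forall>X<3. \<forall>Y<3. B (sw t (3*J+X, 3*I+Y)) = L (aff a u X) (aff b v Y)"
      using H[rule_format, OF IJ(2) IJ(1)] by blast
    have hh: "\<forall>X<3. \<forall>Y<3. B (3*I+X, 3*J+Y) = L (aff a u Y) (aff b v X)"
    proof (intro allI impI)
      fix X Y :: nat assume "X < 3" "Y < 3"
      then show "B (3*I+X, 3*J+Y) = L (aff a u Y) (aff b v X)"
        using h(3)[rule_format, of Y X] True by (simp add: sw_def)
    qed
    show "\<exists>u<3. \<exists>v<3. \<forall>X<3. \<forall>Y<3. B (3*I+X, 3*J+Y) = (\<lambda>p q. L q p) (aff b u X) (aff a v Y)"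
      using hh h(1,2) by blast
  qed
  then show ?thesis by (rule KW[OF s b a, of "\<lambda>p q. L q p"])
qed

lemma keed_sw:
  assumes k: "keedwell B" and IJ: "I < 3" "J < 3"
  shows "\<exists>cc<3. \<exists>dd<3. \<forall>X<3. \<forall>Y<3. B (sw t (3*I+X, 3*J+Y)) = B (sw t (aff 1 (2*cc) X, aff 1 (2*dd) Y))"
proof -
  obtain c d where cd: "\<forall>i<3. \<forall>j<3. c i j < 3 \<and> d i j < 3 \<and>
      (\<forall>x<3. \<forall>y<3. B (3*i+x, 3*j+y) = B (aff 1 (2 * c i j) x, aff 1 (2 * d i j) y))"
    using k unfolding keed_iff by blast
  show ?thesis
  proof (cases t)
    case False
    have "c I J < 3" "d I J < 3" "\<forall>x<3. \<forall>y<3. B (3*I+x, 3*J+y) = B (aff 1 (2 * c I J) x, aff 1 (2 * d I J) y)"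
      using cd[rule_format, OF IJ] by auto
    then show ?thesis using False by (auto simp: sw_def)
  next
    case True
    have "c J I < 3" "d J I < 3" "\<forall>x<3. \<forall>y<3. B (3*J+x, 3*I+y) = B (aff 1 (2 * c J I) x, aff 1 (2 * d J I) y)"
      using cd[rule_format, OF IJ(2) IJ(1)] by auto
    then show ?thesis using True by (auto simp: sw_def)
  qed
qed



lemma grid_iff[simp]: "(r,c) \<in> grid \<longleftrightarrow> r < 9 \<and> c < (9::nat)"
  by (simp add: grid_def)

lemma sw_grid[simp]: "sw t (a,b) \<in> grid \<longleftrightarrow> a < 9 \<and> b < 9"
  by (auto simp: sw_def)

lemma sw_inj: "sw t p = sw t q \<Longrightarrow> p = q"
  by (cases p; cases q; cases t) (auto simp: sw_def)

lemma split9: "R < 9 \<Longrightarrow> R = 3*(R div 3) + R mod 3 \<and> R div 3 < 3 \<and> R mod 3 < (3::nat)"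
  by auto

lemma bf_e: "bf P e k \<Longrightarrow> i < 3 \<Longrightarrow> e i \<in> {1,2}" by (simp add: bf_def)
lemma bf_k: "bf P e k \<Longrightarrow> i < 3 \<Longrightarrow> k i < 3" by (simp add: bf_def)
lemma bf_P: "bf P e k \<Longrightarrow> P permutes {0..<3}" by (simp add: bf_def)

lemma bmap_inv: "bf P e k \<Longrightarrow> i < 3 \<Longrightarrow> X < 3 \<Longrightarrow>
   bmap P e k i (aff (e i) (e i * (3 - k i)) X) = 3 * P i + X"
  unfolding bmap_def using aff_inv bf_e bf_k by simp

lemma bmap_surj: "bf P e k \<Longrightarrow> R < 9 \<Longrightarrow> \<exists>i<3. \<exists>x<3. bmap P e k i x = R"
proof -
  assume b: "bf P e k" "R < 9"
  have "R div 3 < 3" using b(2) by simp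
  then obtain i where i: "i < 3" "P i = R div 3" using perm_surj[OF bf_P[OF b(1)]] by blast
  have "bmap P e k i (aff (e i) (e i * (3 - k i)) (R mod 3)) = 3 * (R div 3) + R mod 3"
    using bmap_inv[OF b(1) i(1), of "R mod 3"] i(2) by simp
  then show ?thesis using i(1) b(2) by (metis aff_lt div_mult_mod_eq mult.commute)
qed

lemma bmap_inj: "bf P e k \<Longrightarrow> i < 3 \<Longrightarrow> i' < 3 \<Longrightarrow> x < 3 \<Longrightarrow> x' < 3 \<Longrightarrow>
   bmap P e k i x = bmap P e k i' x' \<Longrightarrow> i = i' \<and> x = x'"
proof -
  assume a: "bf P e k" "i < 3" "i' < 3" "x < 3" "x' < 3" "bmap P e k i x = bmap P e k i' x'"
  have "P i = P i'" using arg_cong[OF a(6), of "\<lambda>r. r div 3"] by simp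
  then have ii: "i = i'" using perm_inj[OF bf_P[OF a(1)]] by blast
  have "aff (e i) (k i) x = aff (e i) (k i) x'" using arg_cong[OF a(6), of "\<lambda>r. r mod 3"] ii by simp
  then have "x = x'" using aff_inj[OF bf_e[OF a(1) a(2)] bf_k[OF a(1) a(2)] a(4) a(5)] by blast
  then show ?thesis using ii by simp
qed

lemma fp_bf: "formp \<sigma> t P e k Q f l \<Longrightarrow> bf P e k \<and> bf Q f l" by (simp add: formp_def)

lemma fp_eq: "formp \<sigma> t P e k Q f l \<Longrightarrow> i < 3 \<Longrightarrow> j < 3 \<Longrightarrow> x < 3 \<Longrightarrow> y < 3 \<Longrightarrow>
   \<sigma> (3*i+x, 3*j+y) = sw t (bmap P e k i x, bmap Q f l j y)"
  by (simp add: formp_def)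

lemma fp_inj: assumes fp: "formp \<sigma> t P e k Q f l" shows "inj_on \<sigma> grid"
proof (rule inj_onI)
  fix z z' assume zz: "z \<in> grid" "z' \<in> grid" "\<sigma> z = \<sigma> z'"
  obtain r c r' c' where rc: "z = (r,c)" "z' = (r',c')" by (cases z; cases z')
  have g: "r < 9" "c < 9" "r' < 9" "c' < 9" using zz(1,2) rc by auto
  have e1: "\<sigma> (r,c) = sw t (bmap P e k (r div 3) (r mod 3), bmap Q f l (c div 3) (c mod 3))"
    using fp_eq[OF fp, of "r div 3" "c div 3" "r mod 3" "c mod 3"] g by simp
  have e2: "\<sigma> (r',c') = sw t (bmap P e k (r' div 3) (r' mod 3), bmap Q f l (c' div 3) (c' mod 3))"
    using fp_eq[OF fp, of "r' div 3" "c' div 3" "r' mod 3" "c' mod 3"] g by simp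
  have "sw t (bmap P e k (r div 3) (r mod 3), bmap Q f l (c div 3) (c mod 3)) =
     sw t (bmap P e k (r' div 3) (r' mod 3), bmap Q f l (c' div 3) (c' mod 3))"
    using zz(3) rc e1 e2 by simp
  then have "bmap P e k (r div 3) (r mod 3) = bmap P e k (r' div 3) (r' mod 3)" and
     "bmap Q f l (c div 3) (c mod 3) = bmap Q f l (c' div 3) (c' mod 3)"
    by (auto dest: sw_inj)
  note bb = fp_bf[OF fp]
  have d: "r div 3 < 3" "r' div 3 < 3" "c div 3 < 3" "c' div 3 < 3" using g by simp_all
  have m: "r mod 3 < 3" "r' mod 3 < 3" "c mod 3 < 3" "c' mod 3 < (3::nat)" by simp_all
  from this \<open>bmap P e k (r div 3) (r mod 3) = bmap P e k (r' div 3) (r' mod 3)\<close>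
  have "r div 3 = r' div 3 \<and> r mod 3 = r' mod 3"
    using bmap_inj[OF conjunct1[OF bb] d(1) d(2) m(1) m(2)] by blast
  moreover have "c div 3 = c' div 3 \<and> c mod 3 = c' mod 3"
    using bmap_inj[OF conjunct2[OF bb] d(3) d(4) m(3) m(4)] \<open>bmap Q f l (c div 3) (c mod 3) = bmap Q f l (c' div 3) (c' mod 3)\<close> by blast
  ultimately have "r div 3 = r' div 3 \<and> r mod 3 = r' mod 3" "c div 3 = c' div 3 \<and> c mod 3 = c' mod 3" by blast+
  then show "z = z'" using rc by (metis div_mult_mod_eq)
qed

lemma fp_surj: assumes fp: "formp \<sigma> t P e k Q f l" and w: "w \<in> grid"
  shows "\<exists>i<3. \<exists>j<3. \<exists>x<3. \<exists>y<3. w = \<sigma> (3*i+x, 3*j+y)"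
proof -
  obtain R C where RC: "sw t (R, C) = w" by (cases w; cases t) (auto simp: sw_def)
  have "R < 9" "C < 9" using w RC by auto
  then obtain i x j y where "i < 3" "x < 3" "bmap P e k i x = R" "j < 3" "y < 3" "bmap Q f l j y = C"
    using bmap_surj fp_bf[OF fp] by metis
  then show ?thesis using fp_eq[OF fp] RC by metis
qed

lemma fp_grid: assumes fp: "formp \<sigma> t P e k Q f l" and ijxy: "i < 3" "j < 3" "x < 3" "y < 3"
  shows "\<sigma> (3*i+x, 3*j+y) \<in> grid"
  using fp_eq[OF fp ijxy] bmap_lt fp_bf[OF fp] ijxy by simp

lemma act_rel: assumes fp: "formp \<sigma> t P e k Q f l" and ijxy: "i < 3" "j < 3" "x < 3" "y < 3"
  shows "act (\<sigma>, \<pi>) B (sw t (bmap P e k i x, bmap Q f l j y)) = \<pi> (B (3*i+x, 3*j+y))"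
proof -
  have z: "(3*i+x, 3*j+y) \<in> grid" using ijxy by simp
  have "inv_into grid \<sigma> (\<sigma> (3*i+x, 3*j+y)) = (3*i+x, 3*j+y)"
    using inv_into_f_f[OF fp_inj[OF fp] z] .
  then show ?thesis using fp_grid[OF fp ijxy] fp_eq[OF fp ijxy] unfolding act_def by simp
qed



lemma aff_modk: "aff a (b mod 3) x = aff a b x"
  unfolding aff_def by (metis mod_add_right_eq)

lemma aff_shift_comp: "aff 1 A (aff e w X) = aff e ((w + A) mod 3) X"
  by (simp add: aff_comp aff_modk)

lemma pi_lt: "\<pi> permutes {0..<9} \<Longrightarrow> v < 9 \<Longrightarrow> \<pi> v < (9::nat)"
  using permutes_in_image[of \<pi> "{0..<9}" v] by simp

lemma pi_inv_lt: "\<pi> permutes {0..<9} \<Longrightarrow> v < 9 \<Longrightarrow> inv \<pi> v < (9::nat)"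
  using pi_lt[OF permutes_inv] by blast

lemma FWD:
  assumes fp: "formp \<sigma> t P e k Q f l" and ce: "\<forall>i<3. e i = e 0" and cf: "\<forall>j<3. f j = f 0"
    and pi: "\<pi> permutes {0..<9}" and kB: "keedwell B" and ext: "B' \<in> extensional grid"
    and rel: "\<forall>i<3. \<forall>j<3. \<forall>x<3. \<forall>y<3. B' (sw t (bmap P e k i x, bmap Q f l j y)) = \<pi> (B (3*i+x, 3*j+y))"
  shows "keedwell B'"
proof -
  have bP: "bf P e k" and bQ: "bf Q f l" using fp_bf[OF fp] by auto
  have sB: "sudoku_board B" using kB unfolding keed_iff by blast
  obtain c d where cd: "\<forall>i<3. \<forall>j<3. c i j < 3 \<and> d i j < 3 \<and>
      (\<forall>x<3. \<forall>y<3. B (3*i+x, 3*j+y) = B (aff 1 (2 * c i j) x, aff 1 (2 * d i j) y))"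
    using kB unfolding keed_iff by blast
  have sb2: "\<forall>r<9. \<forall>c<9. B (r,c) < 9" and sb3: "\<forall>r<9. \<forall>v<9. \<exists>c<9. B (r,c) = v"
    and sb4: "\<forall>c<9. \<forall>v<9. \<exists>r<9. B (r,c) = v"
    and sb5: "\<forall>i<3. \<forall>j<3. \<forall>v<9. \<exists>x<3. \<exists>y<3. B (3*i+x, 3*j+y) = v"
    using sB unfolding sudoku_char by blast+
  have piinv: "\<And>v. \<pi> (inv \<pi> v) = v" using permutes_inverses(1)[OF pi] .
  have sB': "sudoku_board B'" unfolding sudoku_char_sw[of B' t]
  proof (intro conjI allI impI)
    show "B' \<in> extensional grid" by (fact ext)
  next
    fix R C :: nat assume RC: "R < 9" "C < 9"
    obtain i x where ix: "i < 3" "x < 3" "bmap P e k i x = R" using bmap_surj[OF bP RC(1)] by blast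
    obtain j y where jy: "j < 3" "y < 3" "bmap Q f l j y = C" using bmap_surj[OF bQ RC(2)] by blast
    have "B' (sw t (R, C)) = \<pi> (B (3*i+x, 3*j+y))" using rel ix jy by blast
    moreover have "B (3*i+x, 3*j+y) < 9" using sb2 l9[OF ix(1,2)] l9[OF jy(1,2)] by blast
    ultimately show "B' (sw t (R, C)) < 9" using pi_lt[OF pi] by simp
  next
    fix R v :: nat assume Rv: "R < 9" "v < 9"
    obtain i x where ix: "i < 3" "x < 3" "bmap P e k i x = R" using bmap_surj[OF bP Rv(1)] by blast
    obtain cc where cc: "cc < 9" "B (3*i+x, cc) = inv \<pi> v"
      using sb3 l9[OF ix(1,2)] pi_inv_lt[OF pi Rv(2)] by blast
    have s: "cc = 3*(cc div 3) + cc mod 3" "cc div 3 < 3" "cc mod 3 < 3" using split9[OF cc(1)] by auto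
    have "B' (sw t (R, bmap Q f l (cc div 3) (cc mod 3))) = \<pi> (B (3*i+x, 3*(cc div 3) + cc mod 3))"
      using rel ix s by blast
    also have "\<dots> = v" using s(1) cc(2) piinv by simp
    finally show "\<exists>C<9. B' (sw t (R, C)) = v" using bmap_lt[OF bQ s(2)] by blast
  next
    fix C v :: nat assume Cv: "C < 9" "v < 9"
    obtain j y where jy: "j < 3" "y < 3" "bmap Q f l j y = C" using bmap_surj[OF bQ Cv(1)] by blast
    obtain rr where rr: "rr < 9" "B (rr, 3*j+y) = inv \<pi> v"
      using sb4 l9[OF jy(1,2)] pi_inv_lt[OF pi Cv(2)] by blast
    have s: "rr = 3*(rr div 3) + rr mod 3" "rr div 3 < 3" "rr mod 3 < 3" using split9[OF rr(1)] by auto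
    have "B' (sw t (bmap P e k (rr div 3) (rr mod 3), C)) = \<pi> (B (3*(rr div 3) + rr mod 3, 3*j+y))"
      using rel jy s by blast
    also have "\<dots> = v" using s(1) rr(2) piinv by simp
    finally show "\<exists>R<9. B' (sw t (R, C)) = v" using bmap_lt[OF bP s(2)] by blast
  next
    fix I J v :: nat assume IJ: "I < 3" "J < 3" and v: "v < 9"
    obtain i where i: "i < 3" "P i = I" using perm_surj[OF bf_P[OF bP] IJ(1)] by blast
    obtain j where j: "j < 3" "Q j = J" using perm_surj[OF bf_P[OF bQ] IJ(2)] by blast
    obtain x y where xy: "x < 3" "y < 3" "B (3*i+x, 3*j+y) = inv \<pi> v"
      using sb5 i(1) j(1) pi_inv_lt[OF pi v] by blast
    have "B' (sw t (3*I + aff (e i) (k i) x, 3*J + aff (f j) (l j) y)) = \<pi> (B (3*i+x, 3*j+y))"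
      using rel i j xy unfolding bmap_def by force
    also have "\<dots> = v" using xy(3) piinv by simp
    finally show "\<exists>x<3. \<exists>y<3. B' (sw t (3*I+x, 3*J+y)) = v" using aff_lt by blast
  qed
  have H: "\<forall>I<3. \<forall>J<3. \<exists>u<3. \<exists>v<3. \<forall>X<3. \<forall>Y<3.
      B' (sw t (3*I+X, 3*J+Y)) = (\<lambda>p q. \<pi> (B (p,q))) (aff (e 0) u X) (aff (f 0) v Y)"
  proof (intro allI impI)
    fix I J :: nat assume IJ: "I < 3" "J < 3"
    obtain i where i: "i < 3" "P i = I" using perm_surj[OF bf_P[OF bP] IJ(1)] by blast
    obtain j where j: "j < 3" "Q j = J" using perm_surj[OF bf_P[OF bQ] IJ(2)] by blast
    have cdij: "c i j < 3" "d i j < 3"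
      "\<forall>x<3. \<forall>y<3. B (3*i+x, 3*j+y) = B (aff 1 (2 * c i j) x, aff 1 (2 * d i j) y)"
      using cd[rule_format, OF i(1) j(1)] by auto
    define u where "u = (e i * (3 - k i) + 2 * c i j) mod 3"
    define v where "v = (f j * (3 - l j) + 2 * d i j) mod 3"
    have "\<forall>X<3. \<forall>Y<3. B' (sw t (3*I+X, 3*J+Y)) = \<pi> (B (aff (e 0) u X, aff (f 0) v Y))"
    proof (intro allI impI)
      fix X Y :: nat assume XY: "X < 3" "Y < 3"
      define x where "x = aff (e i) (e i * (3 - k i)) X"
      define y where "y = aff (f j) (f j * (3 - l j)) Y"
      have xy: "x < 3" "y < 3" unfolding x_def y_def by simp_all
      have "B' (sw t (3*I+X, 3*J+Y)) = B' (sw t (bmap P e k i x, bmap Q f l j y))"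
        using bmap_inv[OF bP i(1) XY(1)] bmap_inv[OF bQ j(1) XY(2)] i(2) j(2)
        unfolding x_def y_def by simp
      also have "\<dots> = \<pi> (B (3*i+x, 3*j+y))" using rel i(1) j(1) xy by blast
      also have "\<dots> = \<pi> (B (aff 1 (2 * c i j) x, aff 1 (2 * d i j) y))" using cdij(3) xy by simp
      also have "aff 1 (2 * c i j) x = aff (e 0) u X"
        unfolding x_def u_def aff_shift_comp using ce[rule_format, OF i(1)] by simp
      also have "aff 1 (2 * d i j) y = aff (f 0) v Y"
        unfolding y_def v_def aff_shift_comp using cf[rule_format, OF j(1)] by simp
      finally show "B' (sw t (3*I+X, 3*J+Y)) = \<pi> (B (aff (e 0) u X, aff (f 0) v Y))" .
    qed
    moreover have "u < 3" "v < 3" unfolding u_def v_def by simp_all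
    ultimately show "\<exists>u<3. \<exists>v<3. \<forall>X<3. \<forall>Y<3.
      B' (sw t (3*I+X, 3*J+Y)) = (\<lambda>p q. \<pi> (B (p,q))) (aff (e 0) u X) (aff (f 0) v Y)" by blast
  qed
  show ?thesis by (rule KW_sw[OF sB' bf_e[OF bP, of 0] bf_e[OF bQ, of 0] H]) simp_all
qed


lemma BWD:
  assumes fp: "formp \<sigma> t P e k Q f l" and ce: "\<forall>i<3. e i = e 0" and cf: "\<forall>j<3. f j = f 0"
    and pi: "\<pi> permutes {0..<9}" and kB': "keedwell B'" and ext: "B \<in> extensional grid"
    and rel: "\<forall>i<3. \<forall>j<3. \<forall>x<3. \<forall>y<3. B' (sw t (bmap P e k i x, bmap Q f l j y)) = \<pi> (B (3*i+x, 3*j+y))"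
  shows "keedwell B"
proof -
  have bP: "bf P e k" and bQ: "bf Q f l" using fp_bf[OF fp] by auto
  have sB': "sudoku_board B'" using kB' unfolding keed_iff by blast
  have s2: "\<forall>r<9. \<forall>c<9. B' (sw t (r,c)) < 9" and s3: "\<forall>r<9. \<forall>v<9. \<exists>c<9. B' (sw t (r,c)) = v"
    and s4: "\<forall>c<9. \<forall>v<9. \<exists>r<9. B' (sw t (r,c)) = v"
    and s5: "\<forall>i<3. \<forall>j<3. \<forall>v<9. \<exists>x<3. \<exists>y<3. B' (sw t (3*i+x, 3*j+y)) = v"
    using sB' unfolding sudoku_char_sw[of B' t] by blast+
  have invpi: "\<And>v. inv \<pi> (\<pi> v) = v" using permutes_inverses(2)[OF pi] .
  have relB: "\<And>i j x y. i < 3 \<Longrightarrow> j < 3 \<Longrightarrow> x < 3 \<Longrightarrow> y < 3 \<Longrightarrow>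
      B (3*i+x, 3*j+y) = inv \<pi> (B' (sw t (bmap P e k i x, bmap Q f l j y)))"
  proof -
    fix i j x y :: nat assume "i < 3" "j < 3" "x < 3" "y < 3"
    then have "B' (sw t (bmap P e k i x, bmap Q f l j y)) = \<pi> (B (3*i+x, 3*j+y))" using rel by blast
    then show "B (3*i+x, 3*j+y) = inv \<pi> (B' (sw t (bmap P e k i x, bmap Q f l j y)))" using invpi by simp
  qed
  have sB: "sudoku_board B" unfolding sudoku_char
  proof (intro conjI allI impI)
    show "B \<in> extensional grid" by (fact ext)
  next
    fix R C :: nat assume RC: "R < 9" "C < 9"
    have r: "R = 3*(R div 3) + R mod 3" "R div 3 < 3" "R mod 3 < 3" using split9[OF RC(1)] by auto
    have c: "C = 3*(C div 3) + C mod 3" "C div 3 < 3" "C mod 3 < 3" using split9[OF RC(2)] by auto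
    have "B (R, C) = inv \<pi> (B' (sw t (bmap P e k (R div 3) (R mod 3), bmap Q f l (C div 3) (C mod 3))))"
      using relB[OF r(2) c(2) r(3) c(3)] r(1) c(1) by simp
    moreover have "B' (sw t (bmap P e k (R div 3) (R mod 3), bmap Q f l (C div 3) (C mod 3))) < 9"
      using s2 bmap_lt[OF bP r(2)] bmap_lt[OF bQ c(2)] by blast
    ultimately show "B (R, C) < 9" using pi_inv_lt[OF pi] by simp
  next
    fix R v :: nat assume Rv: "R < 9" "v < 9"
    have r: "R = 3*(R div 3) + R mod 3" "R div 3 < 3" "R mod 3 < 3" using split9[OF Rv(1)] by auto
    obtain C where C: "C < 9" "B' (sw t (bmap P e k (R div 3) (R mod 3), C)) = \<pi> v"
      using s3 bmap_lt[OF bP r(2)] pi_lt[OF pi Rv(2)] by blast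
    obtain j y where jy: "j < 3" "y < 3" "bmap Q f l j y = C" using bmap_surj[OF bQ C(1)] by blast
    have "B (R, 3*j+y) = v"
      using relB[OF r(2) jy(1) r(3) jy(2)] r(1) C(2) jy(3) invpi by simp
    then show "\<exists>c<9. B (R, c) = v" using l9[OF jy(1,2)] by blast
  next
    fix C v :: nat assume Cv: "C < 9" "v < 9"
    have c: "C = 3*(C div 3) + C mod 3" "C div 3 < 3" "C mod 3 < 3" using split9[OF Cv(1)] by auto
    obtain R where R: "R < 9" "B' (sw t (R, bmap Q f l (C div 3) (C mod 3))) = \<pi> v"
      using s4 bmap_lt[OF bQ c(2)] pi_lt[OF pi Cv(2)] by blast
    obtain i x where ix: "i < 3" "x < 3" "bmap P e k i x = R" using bmap_surj[OF bP R(1)] by blast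
    have "B (3*i+x, C) = v"
      using relB[OF ix(1) c(2) ix(2) c(3)] c(1) R(2) ix(3) invpi by simp
    then show "\<exists>r<9. B (r, C) = v" using l9[OF ix(1,2)] by blast
  next
    fix i j v :: nat assume ij: "i < 3" "j < 3" and v: "v < 9"
    have Pi: "P i < 3" using perm_lt[OF bf_P[OF bP] ij(1)] .
    have Qj: "Q j < 3" using perm_lt[OF bf_P[OF bQ] ij(2)] .
    obtain X Y where XY: "X < 3" "Y < 3" "B' (sw t (3 * P i + X, 3 * Q j + Y)) = \<pi> v"
      using s5 Pi Qj pi_lt[OF pi v] by blast
    define x where "x = aff (e i) (e i * (3 - k i)) X"
    define y where "y = aff (f j) (f j * (3 - l j)) Y"
    have xy: "x < 3" "y < 3" unfolding x_def y_def by simp_all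
    have "B (3*i+x, 3*j+y) = v"
      using relB[OF ij xy] bmap_inv[OF bP ij(1) XY(1)] bmap_inv[OF bQ ij(2) XY(2)] XY(3) invpi
      unfolding x_def y_def by simp
    then show "\<exists>x<3. \<exists>y<3. B (3*i+x, 3*j+y) = v" using xy by blast
  qed
  have H: "\<forall>i<3. \<forall>j<3. \<exists>u<3. \<exists>v<3. \<forall>x<3. \<forall>y<3.
      B (3*i+x, 3*j+y) = (\<lambda>p q. inv \<pi> (B' (sw t (p,q)))) (aff (e 0) u x) (aff (f 0) v y)"
  proof (intro allI impI)
    fix i j :: nat assume ij: "i < 3" "j < 3"
    have Pi: "P i < 3" using perm_lt[OF bf_P[OF bP] ij(1)] .
    have Qj: "Q j < 3" using perm_lt[OF bf_P[OF bQ] ij(2)] .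
    obtain cc dd where cc: "cc < 3" "dd < 3"
      "\<forall>X<3. \<forall>Y<3. B' (sw t (3 * P i + X, 3 * Q j + Y)) = B' (sw t (aff 1 (2*cc) X, aff 1 (2*dd) Y))"
      using keed_sw[OF kB' Pi Qj, of t] by blast
    define u where "u = (k i + 2 * cc) mod 3"
    define v where "v = (l j + 2 * dd) mod 3"
    have "\<forall>x<3. \<forall>y<3. B (3*i+x, 3*j+y) = inv \<pi> (B' (sw t (aff (e 0) u x, aff (f 0) v y)))"
    proof (intro allI impI)
      fix x y :: nat assume xy: "x < 3" "y < 3"
      have ax: "aff 1 (2*cc) (aff (e i) (k i) x) = aff (e 0) u x"
        unfolding u_def aff_shift_comp using ce[rule_format, OF ij(1)] by simp
      have ay: "aff 1 (2*dd) (aff (f j) (l j) y) = aff (f 0) v y"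
        unfolding v_def aff_shift_comp using cf[rule_format, OF ij(2)] by simp
      have "B (3*i+x, 3*j+y) = inv \<pi> (B' (sw t (3 * P i + aff (e i) (k i) x, 3 * Q j + aff (f j) (l j) y)))"
        using relB[OF ij xy] unfolding bmap_def .
      also have "\<dots> = inv \<pi> (B' (sw t (aff 1 (2*cc) (aff (e i) (k i) x), aff 1 (2*dd) (aff (f j) (l j) y))))"
        using cc(3) by simp
      also have "\<dots> = inv \<pi> (B' (sw t (aff (e 0) u x, aff (f 0) v y)))" using ax ay by simp
      finally show "B (3*i+x, 3*j+y) = inv \<pi> (B' (sw t (aff (e 0) u x, aff (f 0) v y)))" .
    qed
    moreover have "u < 3" "v < 3" unfolding u_def v_def by simp_all
    ultimately show "\<exists>u<3. \<exists>v<3. \<forall>x<3. \<forall>y<3.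
      B (3*i+x, 3*j+y) = (\<lambda>p q. inv \<pi> (B' (sw t (p,q)))) (aff (e 0) u x) (aff (f 0) v y)" by blast
  qed
  show ?thesis by (rule KW[OF sB bf_e[OF bP, of 0] bf_e[OF bQ, of 0] H]) simp_all
qed



lemma aff_back: "p < 3 \<Longrightarrow> aff 1 (2*c) (aff 1 (4*c) p) = p"
proof -
  assume p: "p < 3"
  have "aff 1 (2*c) (aff 1 (4*c) p) = aff 1 (3*(2*c)) p" by (simp add: aff_comp)
  also have "\<dots> = aff 1 ((3*(2*c)) mod 3) p" by (simp only: aff_modk)
  also have "\<dots> = p" using p by (simp add: aff_def)
  finally show ?thesis .
qed

lemma NEC:
  assumes fp: "formp \<sigma> t P e k Q f l" and kB: "keedwell B" and kB': "keedwell B'"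
    and rel: "\<forall>i<3. \<forall>j<3. \<forall>x<3. \<forall>y<3. B' (sw t (bmap P e k i x, bmap Q f l j y)) = \<pi> (B (3*i+x, 3*j+y))"
  shows "(\<forall>i<3. e i = e 0) \<and> (\<forall>j<3. f j = f 0)"
proof -
  have bP: "bf P e k" and bQ: "bf Q f l" using fp_bf[OF fp] by auto
  have sB': "sudoku_board B'" using kB' unfolding keed_iff by blast
  obtain c d where cd: "\<forall>i<3. \<forall>j<3. c i j < 3 \<and> d i j < 3 \<and>
      (\<forall>x<3. \<forall>y<3. B (3*i+x, 3*j+y) = B (aff 1 (2 * c i j) x, aff 1 (2 * d i j) y))"
    using kB unfolding keed_iff by blast
  have key: "\<And>i j. i < 3 \<Longrightarrow> j < 3 \<Longrightarrow> \<exists>W V. \<forall>p<3. \<forall>q<3. \<pi> (B (p,q)) = B' (sw t (aff (e i) W p, aff (f j) V q))"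
  proof -
    fix i j :: nat assume ij: "i < 3" "j < 3"
    have Pi: "P i < 3" using perm_lt[OF bf_P[OF bP] ij(1)] .
    have Qj: "Q j < 3" using perm_lt[OF bf_P[OF bQ] ij(2)] .
    obtain cc dd where cc: "cc < 3" "dd < 3"
      "\<forall>X<3. \<forall>Y<3. B' (sw t (3 * P i + X, 3 * Q j + Y)) = B' (sw t (aff 1 (2*cc) X, aff 1 (2*dd) Y))"
      using keed_sw[OF kB' Pi Qj, of t] by blast
    have cdij: "\<forall>x<3. \<forall>y<3. B (3*i+x, 3*j+y) = B (aff 1 (2 * c i j) x, aff 1 (2 * d i j) y)"
      using cd[rule_format, OF ij] by blast
    show "\<exists>W V. \<forall>p<3. \<forall>q<3. \<pi> (B (p,q)) = B' (sw t (aff (e i) W p, aff (f j) V q))"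
    proof (intro exI allI impI)
      fix p q :: nat assume pq: "p < 3" "q < 3"
      define x where "x = aff 1 (4 * c i j) p"
      define y where "y = aff 1 (4 * d i j) q"
      have xy: "x < 3" "y < 3" unfolding x_def y_def by simp_all
      have "\<pi> (B (p,q)) = \<pi> (B (3*i+x, 3*j+y))"
        using cdij xy aff_back[OF pq(1), of "c i j"] aff_back[OF pq(2), of "d i j"]
        unfolding x_def y_def by simp
      also have "\<dots> = B' (sw t (3 * P i + aff (e i) (k i) x, 3 * Q j + aff (f j) (l j) y))"
        using rel ij xy unfolding bmap_def by simp
      also have "\<dots> = B' (sw t (aff 1 (2*cc) (aff (e i) (k i) x), aff 1 (2*dd) (aff (f j) (l j) y)))"
        using cc(3) by simp
      also have "\<dots> = B' (sw t (aff (e i) (e i * (4 * c i j) + k i + 2*cc) p, aff (f j) (f j * (4 * d i j) + l j + 2*dd) q))"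
        unfolding x_def y_def by (simp add: aff_comp)
      finally show "\<pi> (B (p,q)) = B' (sw t (aff (e i) (e i * (4 * c i j) + k i + 2*cc) p, aff (f j) (f j * (4 * d i j) + l j + 2*dd) q))" .
    qed
  qed
  obtain W0 V0 where k00: "\<forall>p<3. \<forall>q<3. \<pi> (B (p,q)) = B' (sw t (aff (e 0) W0 p, aff (f 0) V0 q))"
    using key[of 0 0] by auto
  have E: "\<forall>i<3. e i = e 0"
  proof (intro allI impI)
    fix i :: nat assume i: "i < 3"
    obtain W V where ki: "\<forall>p<3. \<forall>q<3. \<pi> (B (p,q)) = B' (sw t (aff (e i) W p, aff (f 0) V q))"
      using key[OF i, of 0] by auto
    have h: "\<And>p. p < 3 \<Longrightarrow> aff (e i) W p = aff (e 0) W0 p"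
    proof -
      fix p :: nat assume p: "p < 3"
      have "B' (sw t (aff (e i) W p, aff (f 0) V 0)) = B' (sw t (aff (e 0) W0 p, aff (f 0) V0 0))"
        using ki k00 p by auto
      then show "aff (e i) W p = aff (e 0) W0 p"
        using sudoku_inj_sw[OF sB' aff_lt aff_lt aff_lt aff_lt] by blast
    qed
    have h0: "aff (e i) W 0 = aff (e 0) W0 0" and h1: "aff (e i) W 1 = aff (e 0) W0 1" using h by simp_all
    show "e i = e 0"
      using slope_eq[OF bf_e[OF bP i] _ h0 h1] bf_e[OF bP, of 0] by simp
  qed
  have F: "\<forall>j<3. f j = f 0"
  proof (intro allI impI)
    fix j :: nat assume j: "j < 3"
    obtain W V where kj: "\<forall>p<3. \<forall>q<3. \<pi> (B (p,q)) = B' (sw t (aff (e 0) W p, aff (f j) V q))"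
      using key[OF _ j, of 0] by auto
    have h: "\<And>q. q < 3 \<Longrightarrow> aff (f j) V q = aff (f 0) V0 q"
    proof -
      fix q :: nat assume q: "q < 3"
      have "B' (sw t (aff (e 0) W 0, aff (f j) V q)) = B' (sw t (aff (e 0) W0 0, aff (f 0) V0 q))"
        using kj k00 q by auto
      then show "aff (f j) V q = aff (f 0) V0 q"
        using sudoku_inj_sw[OF sB' aff_lt aff_lt aff_lt aff_lt] by blast
    qed
    have h0: "aff (f j) V 0 = aff (f 0) V0 0" and h1: "aff (f j) V 1 = aff (f 0) V0 1" using h by simp_all
    show "f j = f 0"
      using slope_eq[OF bf_e[OF bQ j] _ h0 h1] bf_e[OF bQ, of 0] by simp
  qed
  show ?thesis using E F by blast
qed

theorem lemma3p5:
  assumes "keedwell B1" and "g \<in> G9" and "keedwell (act g B1)"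
  shows "g \<in> Gk"
proof -
  obtain \<sigma> \<pi> where g: "g = (\<sigma>, \<pi>)" by (cases g)
  have sH: "\<sigma> \<in> H9" and pi: "\<pi> permutes {0..<9}" using assms(2) g unfolding G9_def by auto
  obtain t P e k Q f l where fp: "formp \<sigma> t P e k Q f l" using H9_form[OF sH] unfolding form_def by blast
  have relg: "\<And>B. \<forall>i<3. \<forall>j<3. \<forall>x<3. \<forall>y<3. act g B (sw t (bmap P e k i x, bmap Q f l j y)) = \<pi> (B (3*i+x, 3*j+y))"
    unfolding g using act_rel[OF fp] by blast
  have NE: "(\<forall>i<3. e i = e 0) \<and> (\<forall>j<3. f j = f 0)"
    using NEC[OF fp assms(1) assms(3) relg] .
  have ce: "\<forall>i<3. e i = e 0" using NE by (rule conjunct1)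
  have cf: "\<forall>j<3. f j = f 0" using NE by (rule conjunct2)
  have ext_act: "\<And>B. act g B \<in> extensional grid" by (simp add: act_def extensional_def)
  have "act g ` {B. keedwell B} = {B. keedwell B}"
  proof
    show "act g ` {B. keedwell B} \<subseteq> {B. keedwell B}"
    proof (rule image_subsetI)
      fix B assume "B \<in> {B. keedwell B}"
      then show "act g B \<in> {B. keedwell B}" using FWD[OF fp ce cf pi _ ext_act[of B] relg[of B]] by blast
    qed
  next
    show "{B. keedwell B} \<subseteq> act g ` {B. keedwell B}"
    proof
      fix B' assume "B' \<in> {B. keedwell B}"
      then have kB': "keedwell B'" by simp
      then have extB': "B' \<in> extensional grid" unfolding keed_iff sudoku_board_def by blast
      define B where "B = (\<lambda>z. if z \<in> grid then inv \<pi> (B' (\<sigma> z)) else undefined)"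
      have extB: "B \<in> extensional grid" by (simp add: B_def extensional_def)
      have piinv: "\<And>v. \<pi> (inv \<pi> v) = v" using permutes_inverses(1)[OF pi] .
      have relB: "\<forall>i<3. \<forall>j<3. \<forall>x<3. \<forall>y<3. B' (sw t (bmap P e k i x, bmap Q f l j y)) = \<pi> (B (3*i+x, 3*j+y))"
      proof (intro allI impI)
        fix i j x y :: nat assume ijxy: "i < 3" "j < 3" "x < 3" "y < 3"
        have "B (3*i+x, 3*j+y) = inv \<pi> (B' (\<sigma> (3*i+x, 3*j+y)))"
          unfolding B_def using l9[OF ijxy(1,3)] l9[OF ijxy(2,4)] by simp
        then show "B' (sw t (bmap P e k i x, bmap Q f l j y)) = \<pi> (B (3*i+x, 3*j+y))"
          using fp_eq[OF fp ijxy] piinv by simp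
      qed
      have kB: "keedwell B" using BWD[OF fp ce cf pi kB' extB relB] .
      have "act g B = B'"
      proof
        fix w
        show "act g B w = B' w"
        proof (cases "w \<in> grid")
          case True
          obtain i j x y where ijxy: "i < 3" "j < 3" "x < 3" "y < 3" and w: "w = \<sigma> (3*i+x, 3*j+y)"
            using fp_surj[OF fp True] by blast
          have z: "(3*i+x, 3*j+y) \<in> grid" using l9[OF ijxy(1,3)] l9[OF ijxy(2,4)] by simp
          have "inv_into grid \<sigma> w = (3*i+x, 3*j+y)" using inv_into_f_f[OF fp_inj[OF fp] z] w by simp
          then show ?thesis using True z piinv w unfolding act_def g B_def by simp
        next
          case False
          then show ?thesis using extensional_arb[OF extB' False] unfolding act_def by simp
        qed
      qed
      then show "B' \<in> act g ` {B. keedwell B}" using kB by blast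
    qed
  qed
  then show ?thesis unfolding Gk_def using assms(2) by blast
qed

end
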